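(* For any positive integers $k\le n$, $$\frac{n(n+1)(n+2)}{(2,n)}\ \Big|\ (n+k+1)\binom{n+k}{k}\binom{n+1}{k+1}\binom{2k}{k+1},$$ where $(2,n)$ is the greatest common divisor of $2$ and $n$. *)

theory Defs
  imports Main
begin

end

theory Submission
  imports Defs
begin
declare binomial_Suc_Suc[simp del]
lemma k_dvd_cat:
  fixes k :: nat assumes "1 \<le> k" shows "k dvd (2 * k choose (k + 1))"
proof -
  obtain j where j: "k = Suc j" using assms by (cases k) auto
  have e1: "Suc (Suc (2*j)) * (Suc (2*j) choose Suc j) = (Suc (Suc (2*j)) choose Suc (Suc j)) * Suc (Suc j)"
    by (rule Suc_times_binomial_eq)
  have e2: "Suc (Suc (2*j)) * (Suc (2*j) choose j) = (Suc (Suc (2*j)) choose Suc j) * Suc j"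
    by (rule Suc_times_binomial_eq)
  have e3: "(Suc (2*j) choose j) = (Suc (2*j) choose Suc j)"
    using binomial_symmetric[of j "Suc (2*j)"] by (simp add: Suc_diff_le)
  have k2: "2 * k = Suc (Suc (2*j))" "k + 1 = Suc (Suc j)" using j by auto
  have "(k+1) * (2*k choose (k+1)) = k * (2*k choose k)"
    unfolding k2 using e1 e2 e3 j by (metis mult.commute)
  then have "k dvd (k+1) * (2*k choose (k+1))" by simp
  moreover have "coprime k (k+1)" by simp
  ultimately show ?thesis using coprime_dvd_mult_right_iff by blast
qed
lemma abs2:
  fixes L G a b c :: nat
  assumes "L * G = a * b"
  shows "a * c * b = (c * L) * G"
proof -
  have "a * c * b = c * (a * b)" by (simp add: ac_simps)
  also have "\<dots> = c * (L * G)" using assms by simp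
  finally show ?thesis by (simp add: ac_simps)
qed

lemma abs1:
  fixes s t a c1 c2 m d1 :: nat
  assumes h1: "s*c1 = m*d1" and h2: "t*a = c2*s"
  shows "s*(t*a*c1) = s*(m*c2*d1)"
proof -
  have "s*(t*a*c1) = (t*a)*(s*c1)" by (simp add: ac_simps)
  also have "\<dots> = c2*s*(m*d1)" using h1 h2 by simp
  finally show ?thesis by (simp add: ac_simps)
qed

lemma I1:
  fixes n k :: nat
  shows "(n + k + 1) * (n + k choose k) * (n + 1 choose (k + 1)) =
         (n + 1) * (n + k + 1 choose (k + 1)) * (n choose k)"
proof -
  have F1: "Suc n * (n choose k) = (Suc n choose Suc k) * Suc k" by (rule Suc_times_binomial_eq)
  have F2: "Suc (n+k) * (n+k choose k) = (Suc (n+k) choose Suc k) * Suc k" by (rule Suc_times_binomial_eq)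
  have "(k+1) * ((n + k + 1) * (n + k choose k) * (n + 1 choose (k + 1))) =
        (k+1) * ((n + 1) * (n + k + 1 choose (k + 1)) * (n choose k))"
    apply (rule abs1) using F1 F2 by (simp_all add: ac_simps)
  moreover have nz: "k+1 \<noteq> 0" by simp
  ultimately show ?thesis by (simp only: mult_left_cancel[OF nz])
qed

lemma G1:
  fixes n k :: nat
  shows "(n + k + 1) * (n + k choose k) = (n + 1) * (n + k + 1 choose k)"
proof -
  have F: "Suc (n+k) * (n+k choose n) = (Suc (n+k) choose Suc n) * Suc n" by (rule Suc_times_binomial_eq)
  have s1: "(n+k choose n) = (n+k choose k)" using binomial_symmetric[of k "n+k"] by simp
  have s2: "(Suc (n+k) choose Suc n) = (n+k+1 choose k)" using binomial_symmetric[of k "n+k+1"] by simp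
  show ?thesis using F s1 s2 by simp
qed

lemma G2:
  fixes n k :: nat
  shows "(n + 2) dvd k * (n + k + 1 choose k)"
proof -
  have F: "Suc (Suc (n+k)) * (Suc (n+k) choose Suc n) = (Suc (Suc (n+k)) choose Suc (Suc n)) * Suc (Suc n)"
    by (rule Suc_times_binomial_eq)
  have s2: "(Suc (n+k) choose Suc n) = (n+k+1 choose k)" using binomial_symmetric[of k "n+k+1"] by simp
  have "(n+2) dvd (n+k+2) * (n+k+1 choose k)" using F s2
    by (metis add_2_eq_Suc' add_Suc_right dvd_triv_right)
  then obtain c where c: "c = (n+k+1 choose k)" "(n+2) dvd (n+k+2) * c" by blast
  moreover have eq: "(n+k+2) * c = (n+2) * c + k * c"
    by (simp add: algebra_simps)
  have "(n+2) dvd (n+2) * c + k * c"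
    using c(2) unfolding eq .
  then show ?thesis using c(1) by (metis dvd_add_right_iff dvd_triv_left)
qed

lemma H1:
  fixes n k :: nat
  assumes "1 \<le> k" "k \<le> n"
  shows "n dvd k * (n choose k)"
proof -
  obtain p j where pj: "n = Suc p" "k = Suc j" using assms by (cases n; cases k) auto
  have "Suc p * (p choose j) = (Suc p choose Suc j) * Suc j" by (rule Suc_times_binomial_eq)
  then show ?thesis using pj by (metis dvd_triv_left mult.commute)
qed

theorem lemma4p2:
  fixes n k :: nat
  assumes "1 \<le> k" and "k \<le> n"
  shows "(n * (n + 1) * (n + 2)) div gcd 2 n dvd
           (n + k + 1) * (n + k choose k) * (n + 1 choose (k + 1)) * (2 * k choose (k + 1))"
  (is "?D dvd ?A")
proof -
  obtain q where q: "(2 * k choose (k + 1)) = k * q" using k_dvd_cat[OF assms(1)] by blast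
  have A1: "?A = (n + 1) * (n + k + 1 choose (k + 1)) * (n choose k) * (2 * k choose (k + 1))"
    by (simp only: I1)
  have dn: "n dvd ?A"
  proof -
    have "?A = (n + 1) * (n + k + 1 choose (k + 1)) * (n choose k) * (k * q)"
      by (simp only: I1 q)
    also have "\<dots> = (k * (n choose k)) * ((n + 1) * (n + k + 1 choose (k + 1)) * q)"
      by (simp only: ac_simps)
    finally have "?A = (k * (n choose k)) * ((n + 1) * (n + k + 1 choose (k + 1)) * q)" .
    then show ?thesis using H1[OF assms] by simp
  qed
  have dn1: "(n+1) dvd ?A"
  proof -
    have "?A = (n + 1) * (n + k + 1 choose (k + 1)) * (n choose k) * (2 * k choose (k + 1))"
      by (rule A1)
    also have "\<dots> = (n + 1) * ((n + k + 1 choose (k + 1)) * (n choose k) * (2 * k choose (k + 1)))"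
      by (simp only: ac_simps)
    finally show ?thesis by (metis dvd_triv_left)
  qed
  have dn2: "(n+2) dvd ?A"
  proof -
    have "?A = ((n+1) * (n + k + 1 choose k)) * (n + 1 choose (k + 1)) * (k * q)"
      by (simp only: G1 q)
    also have "\<dots> = (k * (n + k + 1 choose k)) * ((n+1) * (n + 1 choose (k + 1)) * q)"
      by (simp only: ac_simps)
    finally have "?A = (k * (n + k + 1 choose k)) * ((n+1) * (n + 1 choose (k + 1)) * q)" .
    then show ?thesis using G2 by (metis dvd_mult2)
  qed
  have l: "lcm n (n+2) dvd ?A" using dn dn2 by (rule lcm_least)
  have "coprime (n+1) (lcm n (n+2))"
  proof -
    have a1: "coprime (n+1) n" by simp
    have a2: "coprime (n+1) (n+2)" by simp
    have c1: "coprime (n+1) (n*(n+2))" using a1 a2 by (simp only: coprime_mult_right_iff)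
    have "lcm n (n+2) dvd n*(n+2)" by (rule lcm_least) (rule dvd_triv_left, rule dvd_triv_right)
    then show ?thesis using c1 by (rule coprime_divisors[OF dvd_refl])
  qed
  then have "(n+1) * lcm n (n+2) dvd ?A" using dn1 l by (intro divides_mult)
  moreover have "?D = (n+1) * lcm n (n+2)"
  proof -
    have g: "gcd n (n+2) = gcd 2 n"
      by (metis add.commute gcd.commute gcd_add2)
    have "lcm n (n+2) * gcd n (n+2) = n * (n+2)" using lcm_mult_gcd[of n "n+2"] by simp
    then have "lcm n (n+2) * gcd 2 n = n * (n+2)" using g by (simp only: g)
    then have "n*(n+1)*(n+2) = ((n+1) * lcm n (n+2)) * gcd 2 n" by (rule abs2)
    moreover have "gcd 2 n > 0" by simp
    ultimately show ?thesis by simp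
  qed
  ultimately show ?thesis by simp
qed
end
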